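(* Let $f\in M^1$, let $\Delta\subset\mathbb{R}^2$ be measurable, let $N\in L^1(\mathbb{R}^2)$ with $\Vert N\Vert_1\le\varepsilon$, and suppose one observes $H=P_{\Delta^c}(V_\varphi f+N)$. Assume that for some $R>0$, \[ \rho(\Delta,R)<1-e^{-\pi/R^2}. \] Then any solution $\sigma(H)$ of \[ \sigma(H)=\arg\min_{h\in M^1}\Vert P_{\Delta^c}(H-V_\varphi h)\Vert_1 \] satisfies \[ \left\Vert V_\varphi\big(f-\sigma(H)\big)\right\Vert_1\le \frac{2\varepsilon\,(1-e^{-\pi/R^2})}{1-e^{-\pi/R^2}-\rho(\Delta,R)}. \]
   Context: Let $\varphi(t)=2^{1/4}e^{-\pi t^2}$. The STFT is $V_\varphi f(x,\omega)=\int_{\mathbb{R}} f(t)\overline{\varphi(t-x)}e^{-2\pi i \omega t}\,dt$. The modulation space $M^1$ is $\{f\in\mathcal{S}'(\mathbb{R}): \Vert V_\varphi f\Vert_{1}<\infty\}$, with $\Vert\cdot\Vert_1$ the $L^1(\mathbb{R}^2)$ norm. For $A\subset\mathbb{R}^2$, $P_A$ is multiplication by $\chi_A$, and $\Delta^c=\mathbb{R}^2\setminus\Delta$. The planar maximum Nyquist density is $\rho(\Delta,R):=\sup_{z\in\mathbb{R}^2}|\Delta\cap(z+D_{1/R})|$, with $D_{1/R}$ the disc of radius $1/R$ centered at the origin and $|\cdot|$ Lebesgue measure. *)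

theory Defs
  imports "HOL-Analysis.Analysis"
begin

definition gauss_window :: "real \<Rightarrow> complex" where
  "gauss_window t = complex_of_real (2 powr (1/4) * exp (- pi * t\<^sup>2))"

definition stft :: "(real \<Rightarrow> complex) \<Rightarrow> real \<times> real \<Rightarrow> complex" where
  "stft f = (\<lambda>(x, \<omega>). integral\<^sup>L lebesgue
      (\<lambda>t. f t * cnj (gauss_window (t - x)) * exp (- 2 * pi * \<i> * complex_of_real (\<omega> * t))))"

definition L1norm :: "(real \<times> real \<Rightarrow> complex) \<Rightarrow> ennreal" where
  "L1norm g = (\<integral>\<^sup>+ z. ennreal (norm (g z)) \<partial>lebesgue)"

definition M1 :: "(real \<Rightarrow> complex) set" where
  "M1 = {f. integrable lebesgue f \<and> stft f \<in> borel_measurable lebesgue \<and> L1norm (stft f) < \<infinity>}"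

definition proj :: "(real \<times> real) set \<Rightarrow> (real \<times> real \<Rightarrow> complex) \<Rightarrow> real \<times> real \<Rightarrow> complex" where
  "proj A g = (\<lambda>z. indicator A z * g z)"

definition nyquist_density :: "(real \<times> real) set \<Rightarrow> real \<Rightarrow> real" where
  "nyquist_density \<Delta> R = (SUP z. measure lebesgue (\<Delta> \<inter> ball z (1 / R)))"

end

theory Submission imports Defs "HOL-Complex_Analysis.Complex_Analysis" begin

lemma hi_cancel:
  fixes c :: complex
  assumes "((\<lambda>s. c * F s) has_integral c * y) S" "c \<noteq> 0"
  shows "(F has_integral y) S"
  using has_integral_mult_right[OF assms(1), of "inverse c"] assms(2) by (simp add: mult.assoc[symmetric])

lemma circle_mean_HK:
  assumes hol: "f holomorphic_on UNIV"
  shows "((\<lambda>s. f (exp (2 * complex_of_real pi * \<i> * complex_of_real s))) has_integral f 0) {0..1}"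
proof -
  have "((\<lambda>u. f u / (u - 0)) has_contour_integral 2 * complex_of_real pi * \<i> * f 0) (circlepath 0 1)"
    by (rule Cauchy_integral_circlepath_simple) (auto intro: holomorphic_on_subset[OF hol])
  hence h: "((\<lambda>x. f (circlepath 0 1 x) / (circlepath 0 1 x - 0) * vector_derivative (circlepath 0 1) (at x within {0..1}))
       has_integral 2 * complex_of_real pi * \<i> * f 0) {0..1}"
    unfolding has_contour_integral_def .
  moreover have eq: "\<And>x. x \<in> {0..1} - {} \<Longrightarrow> (2 * complex_of_real pi * \<i>) * f (exp (2 * complex_of_real pi * \<i> * complex_of_real x))
     = f (circlepath 0 1 x) / (circlepath 0 1 x - 0) * vector_derivative (circlepath 0 1) (at x within {0..1})"
    by (clarsimp, subst vector_derivative_circlepath01, auto simp: circlepath)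
  have "((\<lambda>s. (2 * complex_of_real pi * \<i>) * f (exp (2 * complex_of_real pi * \<i> * complex_of_real s))) has_integral
     (2 * complex_of_real pi * \<i>) * f 0) {0..1}"
    by (rule has_integral_spike_finite[OF finite.emptyI eq h])
  thus ?thesis by (rule hi_cancel) simp
qed

lemma circle_mean:
  assumes hol: "f holomorphic_on UNIV"
  shows "set_integrable lborel {0..1::real} (\<lambda>s. f (exp (2 * complex_of_real pi * \<i> * complex_of_real s)))"
    and "(LINT s:{0..1}|lborel. f (exp (2 * complex_of_real pi * \<i> * complex_of_real s))) = f 0"
proof -
  have cont: "continuous_on {0..1::real} (\<lambda>s. f (exp (2 * complex_of_real pi * \<i> * complex_of_real s)))"
    by (rule continuous_on_compose2[OF holomorphic_on_imp_continuous_on[OF hol]]) (auto intro!: continuous_intros)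
  show si: "set_integrable lborel {0..1::real} (\<lambda>s. f (exp (2 * complex_of_real pi * \<i> * complex_of_real s)))"
    unfolding set_integrable_def by (rule borel_integrable_compact[OF _ cont]) auto
  show "(LINT s:{0..1}|lborel. f (exp (2 * complex_of_real pi * \<i> * complex_of_real s))) = f 0"
    using set_borel_integral_eq_integral(2)[OF si] integral_unique[OF circle_mean_HK[OF hol]] by simp
qed


definition Ek :: "real \<Rightarrow> real \<Rightarrow> real \<Rightarrow> complex \<Rightarrow> complex" where
 "Ek a b t \<xi> = exp (- complex_of_real (pi*(t-a)^2) - 2 * complex_of_real pi * \<i> * complex_of_real (b*t)
     + 2 * complex_of_real (pi*(t-a)) * \<xi> - complex_of_real pi * \<xi>^2 / 2)"

lemma Ek_hol: "Ek a b t holomorphic_on UNIV"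
  unfolding Ek_def by (intro holomorphic_intros) auto

lemma Ek_bound: "norm (Ek a b t \<xi>) \<le> exp (pi * (norm \<xi>)^2 / 2)"
proof -
  have "Re (- complex_of_real (pi*(t-a)^2) - 2 * complex_of_real pi * \<i> * complex_of_real (b*t)
     + 2 * complex_of_real (pi*(t-a)) * \<xi> - complex_of_real pi * \<xi>^2 / 2)
     = - pi*(t-a)^2 + 2*pi*(t-a)*Re \<xi> - pi*((Re \<xi>)^2 - (Im \<xi>)^2)/2"
    by (simp add: power2_eq_square)
  also have "\<dots> \<le> pi * (norm \<xi>)^2 / 2"
  proof -
    have "- pi*(t-a)^2 + 2*pi*(t-a)*Re \<xi> - pi*(Re \<xi>)^2 = - pi * (t - a - Re \<xi>)^2"
      by (simp add: power2_eq_square algebra_simps)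
    also have "\<dots> \<le> 0" by simp
    finally have "- pi*(t-a)^2 + 2*pi*(t-a)*Re \<xi> - pi*(Re \<xi>)^2 \<le> 0" .
    moreover have "pi * (norm \<xi>)^2 = pi * (Re \<xi>)^2 + pi * (Im \<xi>)^2" by (simp add: cmod_power2 algebra_simps)
    moreover have "pi*((Re \<xi>)^2 - (Im \<xi>)^2) = pi * (Re \<xi>)^2 - pi * (Im \<xi>)^2" by (simp add: algebra_simps)
    ultimately show ?thesis by linarith
  qed
  finally have R: "Re (- complex_of_real (pi*(t-a)^2) - 2 * complex_of_real pi * \<i> * complex_of_real (b*t)
     + 2 * complex_of_real (pi*(t-a)) * \<xi> - complex_of_real pi * \<xi>^2 / 2) \<le> pi * (norm \<xi>)^2 / 2" .
  show ?thesis unfolding Ek_def norm_exp_eq_Re by (subst exp_le_cancel_iff) (rule R)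
qed

lemma kernel_arg:
  "complex_of_real (-pi*(t-(a+p))^2) + complex_of_real (-2*pi) * \<i> * complex_of_real ((b+q)*t)
   = (- \<i> * complex_of_real (pi*p*q + 2*pi*a*q) + complex_of_real (-(pi*(p^2+q^2)/2)))
     + (- complex_of_real (pi*(t-a)^2) - 2 * complex_of_real pi * \<i> * complex_of_real (b*t)
     + 2 * complex_of_real (pi*(t-a)) * Complex p (-q) - complex_of_real pi * (Complex p (-q))^2 / 2)"
  by (simp add: complex_eq_iff power2_eq_square field_simps)

lemma kernel_id:
  "cnj (gauss_window (t - (a+p))) * exp (complex_of_real (-2*pi) * \<i> * complex_of_real ((b+q)*t))
   = complex_of_real (2 powr (1/4)) * (exp (- \<i> * complex_of_real (pi*p*q + 2*pi*a*q)) * exp (complex_of_real (-(pi*(p^2+q^2)/2)))) * Ek a b t (Complex p (-q))"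
proof -
  have "cnj (gauss_window (t - (a+p))) = complex_of_real (2 powr (1/4)) * exp (complex_of_real (-pi*(t-(a+p))^2))"
    unfolding gauss_window_def by (simp only: of_real_mult[symmetric] exp_of_real complex_cnj_complex_of_real)
  hence "cnj (gauss_window (t - (a+p))) * exp (complex_of_real (-2*pi) * \<i> * complex_of_real ((b+q)*t))
     = complex_of_real (2 powr (1/4)) * exp (complex_of_real (-pi*(t-(a+p))^2) + complex_of_real (-2*pi) * \<i> * complex_of_real ((b+q)*t))"
    by (subst exp_add) (simp only: mult.assoc)
  also have "\<dots> = complex_of_real (2 powr (1/4)) * exp ((- \<i> * complex_of_real (pi*p*q + 2*pi*a*q) + complex_of_real (-(pi*(p^2+q^2)/2)))
     + (- complex_of_real (pi*(t-a)^2) - 2 * complex_of_real pi * \<i> * complex_of_real (b*t)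
     + 2 * complex_of_real (pi*(t-a)) * Complex p (-q) - complex_of_real pi * (Complex p (-q))^2 / 2))"
    by (simp only: kernel_arg)
  also have "\<dots> = complex_of_real (2 powr (1/4)) * (exp (- \<i> * complex_of_real (pi*p*q + 2*pi*a*q)) * exp (complex_of_real (-(pi*(p^2+q^2)/2)))) * Ek a b t (Complex p (-q))"
    unfolding Ek_def exp_add by (simp only: mult.assoc)
  finally show ?thesis .
qed

definition Gf :: "(real \<Rightarrow> complex) \<Rightarrow> real \<Rightarrow> real \<Rightarrow> complex \<Rightarrow> complex" where
  "Gf g a b \<xi> = (LINT t|lborel. g t * Ek a b t \<xi>)"

lemma cnj_meas[measurable]: "f \<in> borel_measurable M \<Longrightarrow> (\<lambda>x. cnj (f x)) \<in> borel_measurable M"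
  by (rule borel_measurable_continuous_on[where f=cnj]) (auto intro: continuous_intros)

lemma Ek_meas[measurable]: "(\<lambda>x. Ek a b (T x) (X x)) \<in> borel_measurable M"
  if [measurable]: "T \<in> borel_measurable M" "X \<in> borel_measurable M"
  unfolding Ek_def by measurable

lemma stft_G:
  assumes [measurable]: "g \<in> borel_measurable borel"
  shows "stft g (a+p, b+q) = complex_of_real (2 powr (1/4)) * (exp (- \<i> * complex_of_real (pi*p*q + 2*pi*a*q)) * exp (complex_of_real (-(pi*(p^2+q^2)/2)))) * Gf g a b (Complex p (-q))"
proof -
  have "stft g (a+p, b+q) = (LINT t|lebesgue. g t * cnj (gauss_window (t - (a+p))) * exp (complex_of_real (-2*pi) * \<i> * complex_of_real ((b+q)*t)))"
    unfolding stft_def by simp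
  also have "\<dots> = (LINT t|lborel. g t * cnj (gauss_window (t - (a+p))) * exp (complex_of_real (-2*pi) * \<i> * complex_of_real ((b+q)*t)))"
    by (rule integral_completion) (unfold gauss_window_def, measurable)
  also have "\<dots> = (LINT t|lborel. complex_of_real (2 powr (1/4)) * (exp (- \<i> * complex_of_real (pi*p*q + 2*pi*a*q)) * exp (complex_of_real (-(pi*(p^2+q^2)/2)))) * (g t * Ek a b t (Complex p (-q))))"
  proof (rule Bochner_Integration.integral_cong[OF refl])
    fix t
    have "g t * cnj (gauss_window (t - (a+p))) * exp (complex_of_real (-2*pi) * \<i> * complex_of_real ((b+q)*t))
       = g t * (cnj (gauss_window (t - (a+p))) * exp (complex_of_real (-2*pi) * \<i> * complex_of_real ((b+q)*t)))"
      by (simp only: mult.assoc)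
    also have "\<dots> = g t * (complex_of_real (2 powr (1/4)) * (exp (- \<i> * complex_of_real (pi*p*q + 2*pi*a*q)) * exp (complex_of_real (-(pi*(p^2+q^2)/2)))) * Ek a b t (Complex p (-q)))"
      by (simp only: kernel_id)
    finally show "g t * cnj (gauss_window (t - (a+p))) * exp (complex_of_real (-2*pi) * \<i> * complex_of_real ((b+q)*t))
       = complex_of_real (2 powr (1/4)) * (exp (- \<i> * complex_of_real (pi*p*q + 2*pi*a*q)) * exp (complex_of_real (-(pi*(p^2+q^2)/2)))) * (g t * Ek a b t (Complex p (-q)))"
      by (simp only: mult_ac)
  qed
  also have "\<dots> = complex_of_real (2 powr (1/4)) * (exp (- \<i> * complex_of_real (pi*p*q + 2*pi*a*q)) * exp (complex_of_real (-(pi*(p^2+q^2)/2)))) * Gf g a b (Complex p (-q))"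
    unfolding Gf_def by (rule integral_mult_right_zero)
  finally show ?thesis .
qed

lemma norm_stft_G:
  assumes [measurable]: "g \<in> borel_measurable borel"
  shows "norm (stft g (a+p, b+q)) = 2 powr (1/4) * exp (-(pi*(p^2+q^2)/2)) * norm (Gf g a b (Complex p (-q)))"
  unfolding stft_G[OF assms] by (simp add: norm_mult norm_exp_eq_Re)

abbreviation "cis2 s \<equiv> exp (2 * complex_of_real pi * \<i> * complex_of_real s)"

lemma norm_cis2: "norm (cis2 s * z) = norm z"
  by (simp add: norm_mult norm_exp_eq_Re)

lemma Gf_circle:
  assumes [measurable]: "g \<in> borel_measurable borel" and int: "integrable lborel g"
  shows "set_integrable lborel {0..1} (\<lambda>s. Gf g a b (cis2 s * \<xi>0))"
    and "(LINT s:{0..1}|lborel. Gf g a b (cis2 s * \<xi>0)) = Gf g a b 0"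
proof -
  define K where "K s t = indicator {0..1::real} s *\<^sub>R (g t * Ek a b t (cis2 s * \<xi>0))" for s t
  define C where "C = exp (pi * (norm \<xi>0)^2 / 2)"
  have Kmeas[measurable]: "(\<lambda>(s,t). K s t) \<in> borel_measurable (lborel \<Otimes>\<^sub>M lborel)"
    unfolding K_def by measurable
  have Kbound: "norm (K s t) \<le> indicator {0..1::real} s * (C * norm (g t))" for s t
    using Ek_bound[of a b t "cis2 s * \<xi>0"]
    by (auto simp: K_def C_def norm_mult norm_cis2 indicator_def mult_left_mono mult.commute)
  have "(\<integral>\<^sup>+ x. ennreal (norm (case x of (s,t) \<Rightarrow> K s t)) \<partial>(lborel \<Otimes>\<^sub>M lborel))
      \<le> (\<integral>\<^sup>+ x. ennreal (indicator {0..1::real} (fst x) * (C * norm (g (snd x)))) \<partial>(lborel \<Otimes>\<^sub>M lborel))"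
    by (rule nn_integral_mono) (auto intro!: ennreal_leI Kbound)
  also have "\<dots> = (\<integral>\<^sup>+ s. \<integral>\<^sup>+ t. ennreal (indicator {0..1::real} s * (C * norm (g t))) \<partial>lborel \<partial>lborel)"
  proof -
    have m: "(\<lambda>x. ennreal (indicator {0..1::real} (fst x) * (C * norm (g (snd x))))) \<in> borel_measurable (lborel \<Otimes>\<^sub>M lborel)"
      by measurable
    show ?thesis using lborel.nn_integral_fst[OF m] by simp
  qed
  also have "\<dots> = (\<integral>\<^sup>+ s. indicator {0..1::real} s * (ennreal C * (\<integral>\<^sup>+ t. ennreal (norm (g t)) \<partial>lborel)) \<partial>lborel)"
    by (rule nn_integral_cong) (auto simp: indicator_def C_def ennreal_mult nn_integral_cmult)
  also have "\<dots> = ennreal C * (\<integral>\<^sup>+ t. ennreal (norm (g t)) \<partial>lborel)"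
    by (subst nn_integral_multc) auto
  also have "\<dots> < \<infinity>"
    using int by (simp add: integrable_iff_bounded ennreal_mult_less_top)
  finally have Kint: "integrable (lborel \<Otimes>\<^sub>M lborel) (\<lambda>(s,t). K s t)"
    by (intro integrableI_bounded Kmeas)
  have eqK: "(\<lambda>s. LINT t|lborel. K s t) = (\<lambda>s. indicator {0..1::real} s *\<^sub>R Gf g a b (cis2 s * \<xi>0))"
    by (rule ext) (simp add: K_def Gf_def)
  show "set_integrable lborel {0..1} (\<lambda>s. Gf g a b (cis2 s * \<xi>0))"
    unfolding set_integrable_def eqK[symmetric] by (rule lborel_pair.integrable_fst[OF Kint])
  have hol: "(\<lambda>\<zeta>. Ek a b t (\<zeta> * \<xi>0)) holomorphic_on UNIV" for t
    unfolding Ek_def by (intro holomorphic_intros) auto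
  have "Gf g a b 0 = (LINT t|lborel. g t * (LINT s:{0..1}|lborel. Ek a b t (cis2 s * \<xi>0)))"
    unfolding Gf_def using circle_mean(2)[OF hol] by simp
  also have "\<dots> = (LINT t|lborel. LINT s|lborel. K s t)"
    unfolding K_def set_lebesgue_integral_def
    by (rule Bochner_Integration.integral_cong[OF refl]) (simp flip: integral_mult_right_zero add: mult.left_commute)
  also have "\<dots> = (LINT s|lborel. LINT t|lborel. K s t)"
    by (rule lborel_pair.Fubini_integral[OF Kint])
  also have "\<dots> = (LINT s:{0..1}|lborel. Gf g a b (cis2 s * \<xi>0))"
    unfolding set_lebesgue_integral_def eqK ..
  finally show "(LINT s:{0..1}|lborel. Gf g a b (cis2 s * \<xi>0)) = Gf g a b 0" ..
qed

definition rot :: "real \<Rightarrow> real \<times> real \<Rightarrow> real \<times> real" where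
  "rot s u = (cos (2 * pi * s) * fst u + sin (2 * pi * s) * snd u, - sin (2 * pi * s) * fst u + cos (2 * pi * s) * snd u)"

lemma rot_meas[measurable]: "(\<lambda>x. rot (S x) (U x)) \<in> borel_measurable M"
  if [measurable]: "S \<in> borel_measurable M" and U: "U \<in> borel_measurable M"
proof -
  have [measurable]: "U \<in> M \<rightarrow>\<^sub>M borel \<Otimes>\<^sub>M borel" using U by (simp add: borel_prod)
  show ?thesis unfolding borel_prod[symmetric] rot_def by measurable
qed

lemma fst_meas2[measurable]: "(fst :: real \<times> real \<Rightarrow> real) \<in> borel_measurable borel"
  by (intro borel_measurable_continuous_onI continuous_intros)

lemma snd_meas2[measurable]: "(snd :: real \<times> real \<Rightarrow> real) \<in> borel_measurable borel"
  by (intro borel_measurable_continuous_onI continuous_intros)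

lemma stft_meas[measurable]:
  assumes [measurable]: "g \<in> borel_measurable borel"
  shows "stft g \<in> borel_measurable borel"
proof -
  have "stft g = (\<lambda>z. LINT t|lborel. g t * cnj (gauss_window (t - fst z)) * exp (complex_of_real (-2*pi) * \<i> * complex_of_real (snd z * t)))"
    unfolding stft_def
    by (rule ext, simp add: split_beta, rule integral_completion) (unfold gauss_window_def, measurable)
  also have "\<dots> \<in> borel_measurable borel"
  proof -
    have M: "(\<lambda>p. g (snd p) * cnj (gauss_window (snd p - fst (fst p))) * exp (complex_of_real (-2*pi) * \<i> * complex_of_real (snd (fst p) * snd p)))
      \<in> borel_measurable (borel \<Otimes>\<^sub>M lborel)"
      unfolding gauss_window_def by measurable
    note lborel.borel_measurable_lebesgue_integral[of "\<lambda>z t. g t * cnj (gauss_window (t - fst z)) * exp (complex_of_real (-2*pi) * \<i> * complex_of_real (snd z * t))" borel]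
    thus ?thesis using M by (simp add: split_beta')
  qed
  finally show ?thesis .
qed

lemma rot_sq_aux:
  fixes c d p q :: real
  assumes "d^2 + c^2 = 1"
  shows "(c*p + d*q)^2 + (-d*p + c*q)^2 = p^2 + q^2"
proof -
  have "(c*p + d*q)^2 + (-d*p + c*q)^2 = (d^2 + c^2) * (p^2 + q^2)"
    by (simp add: power2_eq_square algebra_simps)
  thus ?thesis using assms by simp
qed

lemma rot_sq: "(fst (rot s u))^2 + (snd (rot s u))^2 = (fst u)^2 + (snd u)^2"
  unfolding rot_def using rot_sq_aux[OF sin_cos_squared_add] by simp

lemma pair_plus: "(a,b) + v = (a + fst v, b + snd v)"
  by (cases v) simp

lemma norm_rot: "norm (rot s u) = norm u"
  using rot_sq[of s u] by (simp add: norm_prod_def)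

lemma cis2_rot: "cis2 s * Complex (fst u) (- snd u) = Complex (fst (rot s u)) (- snd (rot s u))"
  by (simp add: complex_eq_iff rot_def Re_exp Im_exp algebra_simps)

lemma CI:
  assumes [measurable]: "g \<in> borel_measurable borel" and int: "integrable lborel g"
  shows "ennreal (norm (stft g w)) \<le> ennreal (exp (pi * (norm u)^2 / 2)) *
      (\<integral>\<^sup>+ s. indicator {0..1::real} s * ennreal (norm (stft g (w + rot s u))) \<partial>lborel)"
proof -
  obtain a b where w: "w = (a,b)" by (cases w)
  define \<xi>0 where "\<xi>0 = Complex (fst u) (- snd u)"
  define c4 where "c4 = (2::real) powr (1/4)"
  define E where "E = exp (pi * (norm u)^2 / 2)"
  have c4: "c4 > 0" unfolding c4_def by simp
  have nw: "norm (stft g w) = c4 * norm (Gf g a b 0)"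
    using norm_stft_G[of g a 0 b 0] by (simp add: w c4_def zero_complex.code)
  have pt: "norm (indicator {0..1::real} s *\<^sub>R Gf g a b (cis2 s * \<xi>0))
      = indicator {0..1::real} s * (E / c4 * norm (stft g (w + rot s u)))" for s
  proof -
    have "norm (stft g (w + rot s u)) = c4 * exp (-(pi*((fst (rot s u))^2+(snd (rot s u))^2)/2)) * norm (Gf g a b (cis2 s * \<xi>0))"
      using norm_stft_G[of g a "fst (rot s u)" b "snd (rot s u)"]
      by (simp add: w c4_def \<xi>0_def cis2_rot pair_plus)
    also have "(fst (rot s u))^2+(snd (rot s u))^2 = (norm u)^2"
      by (simp add: rot_sq norm_prod_def)
    finally have "norm (stft g (w + rot s u)) = c4 / E * norm (Gf g a b (cis2 s * \<xi>0))"
      by (simp add: E_def exp_minus field_simps)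
    hence "norm (Gf g a b (cis2 s * \<xi>0)) = E / c4 * norm (stft g (w + rot s u))"
      using c4 by (simp add: E_def field_simps)
    thus ?thesis by (simp add: indicator_def)
  qed
  have "norm (Gf g a b 0) \<le> (\<integral>\<^sup>+ s. ennreal (norm (indicator {0..1::real} s *\<^sub>R Gf g a b (cis2 s * \<xi>0))) \<partial>lborel)"
    using integral_norm_bound_ennreal[OF Gf_circle(1)[OF assms, of a b \<xi>0, unfolded set_integrable_def]]
      Gf_circle(2)[OF assms, of a b \<xi>0]
    by (simp add: set_lebesgue_integral_def)
  also have "\<dots> = (\<integral>\<^sup>+ s. ennreal (E / c4) * (indicator {0..1::real} s * ennreal (norm (stft g (w + rot s u)))) \<partial>lborel)"
  proof (rule nn_integral_cong)
    fix s
    have "E / c4 \<ge> 0" using c4 by (simp add: E_def)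
    thus "ennreal (norm (indicator {0..1::real} s *\<^sub>R Gf g a b (cis2 s * \<xi>0))) =
       ennreal (E / c4) * (indicator {0..1::real} s * ennreal (norm (stft g (w + rot s u))))"
      unfolding pt by (cases "s \<in> {0..1}") (simp_all add: ennreal_mult[symmetric] del: times_divide_eq_left times_divide_eq_right)
  qed
  also have "\<dots> = ennreal (E / c4) * (\<integral>\<^sup>+ s. indicator {0..1::real} s * ennreal (norm (stft g (w + rot s u))) \<partial>lborel)"
    by (rule nn_integral_cmult) measurable
  finally have "ennreal (c4 * norm (Gf g a b 0)) \<le> ennreal c4 * (ennreal (E / c4) * (\<integral>\<^sup>+ s. indicator {0..1::real} s * ennreal (norm (stft g (w + rot s u))) \<partial>lborel))"
    using c4 by (simp add: ennreal_mult mult_left_mono)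
  also have "\<dots> = ennreal E * (\<integral>\<^sup>+ s. indicator {0..1::real} s * ennreal (norm (stft g (w + rot s u))) \<partial>lborel)"
  proof -
    have "ennreal c4 * ennreal (E / c4) = ennreal E" using c4 by (simp add: ennreal_mult[symmetric] E_def)
    thus ?thesis by (simp add: mult.assoc[symmetric])
  qed
  finally show ?thesis unfolding nw E_def .
qed

lemma shx_inv:
  fixes h :: "real \<times> real \<Rightarrow> ennreal"
  assumes [measurable]: "h \<in> borel_measurable borel"
  shows "(\<integral>\<^sup>+ z. h (fst z + c * snd z, snd z) \<partial>lborel) = (\<integral>\<^sup>+ z. h z \<partial>lborel)"
proof -
  have [measurable]: "h \<in> borel_measurable (lborel \<Otimes>\<^sub>M lborel)"
    by (simp add: lborel_prod)
  have "(\<integral>\<^sup>+ z. h (fst z + c * snd z, snd z) \<partial>lborel) = (\<integral>\<^sup>+ z. h (fst z + c * snd z, snd z) \<partial>(lborel \<Otimes>\<^sub>M lborel))"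
    by (simp add: lborel_prod)
  also have "\<dots> = (\<integral>\<^sup>+ q. \<integral>\<^sup>+ p. h (p + c * q, q) \<partial>lborel \<partial>lborel)"
  proof -
    have m: "(\<lambda>z. h (fst z + c * snd z, snd z)) \<in> borel_measurable (lborel \<Otimes>\<^sub>M lborel)" by measurable
    show ?thesis using lborel_pair.nn_integral_snd[OF m] by simp
  qed
  also have "\<dots> = (\<integral>\<^sup>+ q. \<integral>\<^sup>+ p. h (p, q) \<partial>lborel \<partial>lborel)"
  proof (rule nn_integral_cong)
    fix q :: real
    have "(\<integral>\<^sup>+ p. h (p, q) \<partial>lborel) = ennreal \<bar>1\<bar> * (\<integral>\<^sup>+ p. h (c * q + 1 * p, q) \<partial>lborel)"
      by (rule nn_integral_real_affine) auto
    thus "(\<integral>\<^sup>+ p. h (p + c * q, q) \<partial>lborel) = (\<integral>\<^sup>+ p. h (p, q) \<partial>lborel)"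
      by (simp add: add.commute)
  qed
  also have "\<dots> = (\<integral>\<^sup>+ z. h z \<partial>(lborel \<Otimes>\<^sub>M lborel))"
    using lborel_pair.nn_integral_snd[of h] by simp
  also have "\<dots> = (\<integral>\<^sup>+ z. h z \<partial>lborel)"
    by (simp add: lborel_prod)
  finally show ?thesis .
qed

lemma shy_inv:
  fixes h :: "real \<times> real \<Rightarrow> ennreal"
  assumes [measurable]: "h \<in> borel_measurable borel"
  shows "(\<integral>\<^sup>+ z. h (fst z, snd z + d * fst z) \<partial>lborel) = (\<integral>\<^sup>+ z. h z \<partial>lborel)"
proof -
  have [measurable]: "h \<in> borel_measurable (lborel \<Otimes>\<^sub>M lborel)"
    by (simp add: lborel_prod)
  have "(\<integral>\<^sup>+ z. h (fst z, snd z + d * fst z) \<partial>lborel) = (\<integral>\<^sup>+ z. h (fst z, snd z + d * fst z) \<partial>(lborel \<Otimes>\<^sub>M lborel))"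
    by (simp add: lborel_prod)
  also have "\<dots> = (\<integral>\<^sup>+ p. \<integral>\<^sup>+ q. h (p, q + d * p) \<partial>lborel \<partial>lborel)"
  proof -
    have m: "(\<lambda>z. h (fst z, snd z + d * fst z)) \<in> borel_measurable (lborel \<Otimes>\<^sub>M lborel)" by measurable
    show ?thesis using lborel.nn_integral_fst[OF m] by simp
  qed
  also have "\<dots> = (\<integral>\<^sup>+ p. \<integral>\<^sup>+ q. h (p, q) \<partial>lborel \<partial>lborel)"
  proof (rule nn_integral_cong)
    fix p :: real
    have "(\<integral>\<^sup>+ q. h (p, q) \<partial>lborel) = ennreal \<bar>1\<bar> * (\<integral>\<^sup>+ q. h (p, d * p + 1 * q) \<partial>lborel)"
      by (rule nn_integral_real_affine) auto
    thus "(\<integral>\<^sup>+ q. h (p, q + d * p) \<partial>lborel) = (\<integral>\<^sup>+ q. h (p, q) \<partial>lborel)"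
      by (simp add: add.commute)
  qed
  also have "\<dots> = (\<integral>\<^sup>+ z. h z \<partial>(lborel \<Otimes>\<^sub>M lborel))"
    using lborel.nn_integral_fst[of h] by simp
  also have "\<dots> = (\<integral>\<^sup>+ z. h z \<partial>lborel)"
    by (simp add: lborel_prod)
  finally show ?thesis .
qed

definition Rot :: "real \<Rightarrow> real \<times> real \<Rightarrow> real \<times> real" where
  "Rot \<phi> u = (cos \<phi> * fst u - sin \<phi> * snd u, sin \<phi> * fst u + cos \<phi> * snd u)"

lemma Rot_meas[measurable]: "Rot \<phi> \<in> borel_measurable borel"
  unfolding Rot_def by (intro borel_measurable_continuous_onI continuous_intros)

lemma Rot_inv_aux:
  fixes h :: "real \<times> real \<Rightarrow> ennreal"
  assumes [measurable]: "h \<in> borel_measurable borel" and cphi: "cos \<phi> \<noteq> -1"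
  shows "(\<integral>\<^sup>+ z. h (Rot \<phi> z) \<partial>lborel) = (\<integral>\<^sup>+ z. h z \<partial>lborel)"
proof -
  define c where "c = - sin \<phi> / (1 + cos \<phi>)"
  define d where "d = sin \<phi>"
  have pos: "1 + cos \<phi> \<noteq> 0" using cphi by linarith
  have c1: "c * (1 + cos \<phi>) = - sin \<phi>" using pos by (simp add: c_def)
  have c2: "1 + c * d = cos \<phi>"
  proof -
    have "c * d * (1 + cos \<phi>) = (c * (1 + cos \<phi>)) * d" by (simp add: algebra_simps)
    also have "\<dots> = - (sin \<phi> * sin \<phi>)" using c1 by (simp add: d_def)
    also have "\<dots> = (cos \<phi> - 1) * (1 + cos \<phi>)" using sin_squared_eq[of \<phi>] by (simp add: power2_eq_square algebra_simps)
    finally have "c * d = cos \<phi> - 1" using pos by simp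
    thus ?thesis by simp
  qed
  define X where "X = (\<lambda>z::real\<times>real. (fst z + c * snd z, snd z))"
  define Y where "Y = (\<lambda>z::real\<times>real. (fst z, snd z + d * fst z))"
  have X_meas[measurable]: "X \<in> borel_measurable borel"
    unfolding X_def by (intro borel_measurable_continuous_onI continuous_intros)
  have Y_meas[measurable]: "Y \<in> borel_measurable borel"
    unfolding Y_def by (intro borel_measurable_continuous_onI continuous_intros)
  have RXYX: "Rot \<phi> z = X (Y (X z))" for z
  proof -
    have "fst z + c * snd z + c * (snd z + d * (fst z + c * snd z)) = (1 + c*d) * fst z + c * (1 + (1 + c * d)) * snd z"
      by (simp add: algebra_simps)
    also have "\<dots> = cos \<phi> * fst z - sin \<phi> * snd z"
      using c1 c2 by (simp add: algebra_simps)
    finally have e1: "fst z + c * snd z + c * (snd z + d * (fst z + c * snd z)) = cos \<phi> * fst z - sin \<phi> * snd z" .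
    have "snd z + d * (fst z + c * snd z) = d * fst z + (1 + c*d) * snd z"
      by (simp add: algebra_simps)
    also have "\<dots> = sin \<phi> * fst z + cos \<phi> * snd z" using c2 by (simp add: d_def)
    finally have e2: "snd z + d * (fst z + c * snd z) = sin \<phi> * fst z + cos \<phi> * snd z" .
    show ?thesis unfolding Rot_def X_def Y_def using e1 e2 by simp
  qed
  have m1: "(\<lambda>z. h (X (Y z))) \<in> borel_measurable borel" by measurable
  have m2: "(\<lambda>z. h (X z)) \<in> borel_measurable borel" by measurable
  have "(\<integral>\<^sup>+ z. h (Rot \<phi> z) \<partial>lborel) = (\<integral>\<^sup>+ z. (\<lambda>z. h (X (Y z))) (fst z + c * snd z, snd z) \<partial>lborel)"
    by (simp add: RXYX X_def)
  also have "\<dots> = (\<integral>\<^sup>+ z. h (X (Y z)) \<partial>lborel)"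
    by (rule shx_inv[OF m1])
  also have "\<dots> = (\<integral>\<^sup>+ z. (\<lambda>z. h (X z)) (fst z, snd z + d * fst z) \<partial>lborel)"
    by (simp add: Y_def)
  also have "\<dots> = (\<integral>\<^sup>+ z. h (X z) \<partial>lborel)"
    by (rule shy_inv[OF m2])
  also have "\<dots> = (\<integral>\<^sup>+ z. h (fst z + c * snd z, snd z) \<partial>lborel)"
    by (simp add: X_def)
  also have "\<dots> = (\<integral>\<^sup>+ z. h z \<partial>lborel)"
    by (rule shx_inv[OF assms(1)])
  finally show ?thesis .
qed

lemma Rot_add: "Rot a (Rot b z) = Rot (a + b) z"
  by (simp add: Rot_def cos_add sin_add algebra_simps)

lemma Rot_inv:
  fixes h :: "real \<times> real \<Rightarrow> ennreal"
  assumes [measurable]: "h \<in> borel_measurable borel"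
  shows "(\<integral>\<^sup>+ z. h (Rot \<phi> z) \<partial>lborel) = (\<integral>\<^sup>+ z. h z \<partial>lborel)"
proof (cases "cos \<phi> = -1")
  case False
  thus ?thesis by (rule Rot_inv_aux[OF assms])
next
  case True
  have "cos \<phi> = 2 * (cos (\<phi>/2))^2 - 1"
    using cos_double_cos[of "\<phi>/2"] by simp
  hence h2: "cos (\<phi>/2) \<noteq> -1" using True by auto
  have "(\<integral>\<^sup>+ z. h (Rot \<phi> z) \<partial>lborel) = (\<integral>\<^sup>+ z. (\<lambda>z. h (Rot (\<phi>/2) z)) (Rot (\<phi>/2) z) \<partial>lborel)"
    by (simp add: Rot_add)
  also have "\<dots> = (\<integral>\<^sup>+ z. h (Rot (\<phi>/2) z) \<partial>lborel)"
    by (rule Rot_inv_aux[OF _ h2]) measurable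
  also have "\<dots> = (\<integral>\<^sup>+ z. h z \<partial>lborel)"
    by (rule Rot_inv_aux[OF assms h2])
  finally show ?thesis .
qed

lemma rot_Rot: "rot s = Rot (- (2 * pi * s))"
  by (rule ext) (simp add: rot_def Rot_def)

lemma rot_inv:
  fixes h :: "real \<times> real \<Rightarrow> ennreal"
  assumes [measurable]: "h \<in> borel_measurable borel"
  shows "(\<integral>\<^sup>+ z. h (rot s z) \<partial>lborel) = (\<integral>\<^sup>+ z. h z \<partial>lborel)"
  unfolding rot_Rot by (rule Rot_inv[OF assms])

lemma ubv2: "unit_ball_vol 2 = pi"
  using unit_ball_vol_even[of 1] by simp

lemma emeasure_cball2: "r \<ge> 0 \<Longrightarrow> emeasure lborel (cball (c::real\<times>real) r) = ennreal (pi * r^2)"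
  by (simp add: emeasure_cball ubv2 power2_eq_square)

lemma emeasure_ball2: "r \<ge> 0 \<Longrightarrow> emeasure lborel (ball (c::real\<times>real) r) = ennreal (pi * r^2)"
  by (simp add: emeasure_ball ubv2 power2_eq_square)

lemma exp_tail: "(\<integral>\<^sup>+ t. ennreal (exp (-t)) * indicator {a..} t \<partial>lborel) = ennreal (exp (-a))"
proof -
  have lim: "((\<lambda>x::real. - exp (- x)) \<longlongrightarrow> 0) at_top"
  proof -
    have "((\<lambda>x::real. exp (- x)) \<longlongrightarrow> 0) at_top"
      by (rule filterlim_compose[OF exp_at_bot filterlim_uminus_at_bot_at_top])
    from tendsto_minus[OF this] show ?thesis by simp
  qed
  have "(\<integral>\<^sup>+ t. ennreal (exp (-t)) * indicator {a..} t \<partial>lborel) = 0 - (- exp (- a))"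
    by (rule nn_integral_FTC_atLeast[OF _ _ _ lim]) (auto intro!: derivative_eq_intros)
  thus ?thesis by simp
qed

lemma texp_int:
  assumes "a \<ge> 0"
  shows "(\<integral>\<^sup>+ t. ennreal (t * exp (-t)) * indicator {0..a} t \<partial>lborel) = ennreal (1 - (a+1) * exp (-a))"
proof -
  have "(\<integral>\<^sup>+ t. ennreal (t * exp (-t)) * indicator {0..a} t \<partial>lborel) = (\<lambda>t. - (t+1) * exp (-t)) a - (\<lambda>t. - (t+1) * exp (-t)) 0"
    by (rule nn_integral_FTC_Icc) (auto intro!: derivative_eq_intros simp: assms algebra_simps)
  thus ?thesis by (simp add: algebra_simps)
qed

lemma level_meas:
  assumes t: "t \<ge> 0" and r: "r \<ge> 0"
  shows "emeasure lborel {u::real\<times>real. u \<in> ball 0 r \<and> pi * (norm u)^2 \<le> t} = ennreal (min t (pi*r^2))"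
proof (cases "t < pi * r^2")
  case True
  define \<rho> where "\<rho> = sqrt (t / pi)"
  have \<rho>0: "\<rho> \<ge> 0" using t by (simp add: \<rho>_def)
  have \<rho>2: "\<rho>^2 = t / pi" using t by (simp add: \<rho>_def)
  have "pi * \<rho>^2 < pi * r^2" using True \<rho>2 by simp
  hence "\<rho>^2 < r^2" by simp
  hence \<rho>r: "\<rho> < r" using r \<rho>0 by (simp add: power_less_imp_less_base)
  have eq: "{u::real\<times>real. u \<in> ball 0 r \<and> pi * (norm u)^2 \<le> t} = cball 0 \<rho>"
  proof (intro set_eqI iffI)
    fix u :: "real\<times>real"
    assume "u \<in> {u. u \<in> ball 0 r \<and> pi * (norm u)^2 \<le> t}"
    hence "(norm u)^2 \<le> t / pi" by (simp add: field_simps mult.commute)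
    hence "norm u \<le> \<rho>" unfolding \<rho>_def by (simp add: real_le_rsqrt)
    thus "u \<in> cball 0 \<rho>" by simp
  next
    fix u :: "real\<times>real"
    assume "u \<in> cball 0 \<rho>"
    hence n: "norm u \<le> \<rho>" by simp
    hence "(norm u)^2 \<le> \<rho>^2" by (simp add: power_mono)
    hence "pi * (norm u)^2 \<le> t" using \<rho>2 by (simp add: field_simps)
    thus "u \<in> {u. u \<in> ball 0 r \<and> pi * (norm u)^2 \<le> t}" using n \<rho>r by simp
  qed
  have "pi * \<rho>^2 = t" using \<rho>2 by simp
  thus ?thesis unfolding eq using True \<rho>0 by (simp add: emeasure_cball2)
next
  case False
  have eq: "{u::real\<times>real. u \<in> ball 0 r \<and> pi * (norm u)^2 \<le> t} = ball 0 r"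
  proof (intro set_eqI iffI)
    fix u :: "real\<times>real"
    assume "u \<in> ball 0 r"
    hence "norm u < r" by simp
    hence "(norm u)^2 \<le> r^2" by (simp add: power_mono)
    hence "pi * (norm u)^2 \<le> pi * r^2" by (rule mult_left_mono) simp
    hence "pi * (norm u)^2 \<le> t" using False by linarith
    thus "u \<in> {u. u \<in> ball 0 r \<and> pi * (norm u)^2 \<le> t}" using \<open>u \<in> ball 0 r\<close> by simp
  qed simp
  show ?thesis unfolding eq using False r by (simp add: emeasure_ball2)
qed

lemma gauss_disc:
  assumes r: "r \<ge> 0"
  shows "(\<integral>\<^sup>+ u. indicator (ball (0::real\<times>real) r) u * ennreal (exp (-(pi * (norm u)^2))) \<partial>lborel) = ennreal (1 - exp (-(pi*r^2)))"
proof -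
  define a where "a = pi * r^2"
  have a0: "a \<ge> 0" using r by (simp add: a_def)
  define S where "S t = {u::real\<times>real. u \<in> ball 0 r \<and> pi * (norm u)^2 \<le> t}" for t
  define Q where "Q u t = ennreal (if norm u < r \<and> pi * (norm u)^2 \<le> t then exp (-t) else 0)" for u :: "real\<times>real" and t :: real
  have Qm: "(\<lambda>(u,t). Q u t) \<in> borel_measurable (lborel \<Otimes>\<^sub>M lborel)"
    unfolding Q_def by measurable
  have "(\<integral>\<^sup>+ u. indicator (ball (0::real\<times>real) r) u * ennreal (exp (-(pi * (norm u)^2))) \<partial>lborel)
      = (\<integral>\<^sup>+ u. \<integral>\<^sup>+ t. Q u t \<partial>lborel \<partial>lborel)"
  proof (rule nn_integral_cong)
    fix u :: "real\<times>real"
    show "indicator (ball (0::real\<times>real) r) u * ennreal (exp (-(pi * (norm u)^2))) = (\<integral>\<^sup>+ t. Q u t \<partial>lborel)"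
    proof (cases "norm u < r")
      case True
      have "(\<integral>\<^sup>+ t. Q u t \<partial>lborel) = (\<integral>\<^sup>+ t. ennreal (exp (-t)) * indicator {pi * (norm u)^2..} t \<partial>lborel)"
        by (rule nn_integral_cong) (simp add: Q_def True indicator_def)
      thus ?thesis using True by (simp add: exp_tail)
    next
      case False
      thus ?thesis by (simp add: Q_def)
    qed
  qed
  also have "\<dots> = (\<integral>\<^sup>+ t. \<integral>\<^sup>+ u. Q u t \<partial>lborel \<partial>lborel)"
    by (rule lborel_pair.Fubini'[OF Qm, symmetric])
  also have "\<dots> = (\<integral>\<^sup>+ t. ennreal (exp (-t)) * emeasure lborel (S t) \<partial>lborel)"
  proof (rule nn_integral_cong)
    fix t :: real
    have "(\<integral>\<^sup>+ u. Q u t \<partial>lborel) = (\<integral>\<^sup>+ u. ennreal (exp (-t)) * indicator (S t) u \<partial>lborel)"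
      by (rule nn_integral_cong) (auto simp: S_def Q_def indicator_def)
    also have "\<dots> = ennreal (exp (-t)) * emeasure lborel (S t)"
    proof (rule nn_integral_cmult_indicator)
      have "S t = {u. norm u < r \<and> pi * (norm u)^2 \<le> t}" by (auto simp: S_def)
      also have "\<dots> \<in> sets lborel" by measurable
      finally show "S t \<in> sets lborel" .
    qed
    finally show "(\<integral>\<^sup>+ u. Q u t \<partial>lborel) = ennreal (exp (-t)) * emeasure lborel (S t)" .
  qed
  also have "\<dots> = (\<integral>\<^sup>+ t. ennreal (t * exp (-t)) * indicator {0..a} t + ennreal a * (ennreal (exp (-t)) * indicator {a..} t) \<partial>lborel)"
  proof (rule nn_integral_cong_AE)
    show "AE t in lborel. ennreal (exp (-t)) * emeasure lborel (S t) = ennreal (t * exp (-t)) * indicator {0..a} t + ennreal a * (ennreal (exp (-t)) * indicator {a..} t)"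
      using AE_lborel_singleton[of a]
    proof eventually_elim
      fix t assume ta: "t \<noteq> a"
      show "ennreal (exp (-t)) * emeasure lborel (S t) = ennreal (t * exp (-t)) * indicator {0..a} t + ennreal a * (ennreal (exp (-t)) * indicator {a..} t)"
      proof (cases "t < 0")
        case True
        have "S t = {}"
        proof -
          { fix u assume "u \<in> S t"
            hence "pi*(norm u)^2 \<le> t" by (simp add: S_def)
            moreover have "0 \<le> pi*(norm u)^2" by simp
            ultimately have False using True by linarith }
          thus ?thesis by auto
        qed
        thus ?thesis using True a0 by (simp add: indicator_def)
      next
        case False
        hence "emeasure lborel (S t) = ennreal (min t a)" unfolding S_def a_def by (intro level_meas r) simp
        moreover have "min t a = (if t \<le> a then t else a)" by simp
        ultimately show ?thesis using False ta a0
          by (auto simp: indicator_def ennreal_mult[symmetric] mult.commute)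
      qed
    qed
  qed
  also have "\<dots> = (\<integral>\<^sup>+ t. ennreal (t * exp (-t)) * indicator {0..a} t \<partial>lborel) + ennreal a * (\<integral>\<^sup>+ t. ennreal (exp (-t)) * indicator {a..} t \<partial>lborel)"
    by (subst nn_integral_add) (auto simp: nn_integral_cmult)
  also have "\<dots> = ennreal (1 - (a+1) * exp (-a)) + ennreal (a * exp (-a))"
    by (simp add: texp_int[OF a0] exp_tail ennreal_mult a0)
  also have "\<dots> = ennreal (1 - exp (-a))"
  proof -
    have "1 + a \<le> exp a" by (rule exp_ge_add_one_self)
    hence "(a+1) * exp (-a) \<le> 1" by (simp add: exp_minus field_simps)
    thus ?thesis using a0 by (subst ennreal_plus[symmetric]) (auto simp: algebra_simps)
  qed
  finally show ?thesis by (simp add: a_def)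
qed

lemma ball_sets[measurable]: "ball (c::'a::euclidean_space) r \<in> sets borel"
  by simp

lemma translate_nn:
  fixes f :: "real\<times>real \<Rightarrow> ennreal"
  assumes [measurable]: "f \<in> borel_measurable borel"
  shows "(\<integral>\<^sup>+ z. f z \<partial>lborel) = (\<integral>\<^sup>+ u. f (w + u) \<partial>lborel)"
proof -
  have "(\<integral>\<^sup>+ z. f z \<partial>lborel) = (\<integral>\<^sup>+ z. f z \<partial>(distr lborel borel ((+) w)))"
    by (simp add: lborel_distr_plus)
  also have "\<dots> = (\<integral>\<^sup>+ u. f (w + u) \<partial>lborel)"
    by (rule nn_integral_distr) auto
  finally show ?thesis .
qed

lemma PW:
  assumes [measurable]: "g \<in> borel_measurable borel" and int: "integrable lborel g" and r: "r \<ge> 0"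
  shows "ennreal ((1 - exp (-(pi*r^2))) * norm (stft g w)) \<le> (\<integral>\<^sup>+ z. indicator (ball w r) z * ennreal (norm (stft g z)) \<partial>lborel)"
proof -
  define F where "F = stft g"
  have Fm[measurable]: "F \<in> borel_measurable borel" unfolding F_def by measurable
  define \<Phi> where "\<Phi> u = indicator (ball 0 r) u * ennreal (exp (-(pi*(norm u)^2/2))) * ennreal (norm (F (w + u)))" for u :: "real\<times>real"
  have \<Phi>m[measurable]: "\<Phi> \<in> borel_measurable borel" unfolding \<Phi>_def by measurable
  have "(\<integral>\<^sup>+ z. indicator (ball w r) z * ennreal (norm (F z)) \<partial>lborel)
      = (\<integral>\<^sup>+ u. indicator (ball w r) (w + u) * ennreal (norm (F (w + u))) \<partial>lborel)"
    by (rule translate_nn) measurable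
  also have "\<dots> \<ge> (\<integral>\<^sup>+ u. \<Phi> u \<partial>lborel)"
  proof (rule nn_integral_mono)
    fix u :: "real\<times>real"
    have "ennreal (exp (-(pi*(norm u)^2/2))) \<le> 1" by simp
    hence "\<Phi> u \<le> indicator (ball 0 r) u * 1 * ennreal (norm (F (w + u)))"
      unfolding \<Phi>_def by (intro mult_mono) auto
    also have "indicator (ball 0 r) u = (indicator (ball w r) (w + u) :: ennreal)"
      by (simp add: indicator_def dist_norm)
    finally show "\<Phi> u \<le> indicator (ball w r) (w + u) * ennreal (norm (F (w + u)))" by simp
  qed
  finally have step1: "(\<integral>\<^sup>+ u. \<Phi> u \<partial>lborel) \<le> (\<integral>\<^sup>+ z. indicator (ball w r) z * ennreal (norm (F z)) \<partial>lborel)" .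
  have "(\<integral>\<^sup>+ u. \<Phi> u \<partial>lborel) = (\<integral>\<^sup>+ s. indicator {0..1::real} s * (\<integral>\<^sup>+ u. \<Phi> u \<partial>lborel) \<partial>lborel)"
    by (subst nn_integral_multc) auto
  also have "\<dots> = (\<integral>\<^sup>+ s. indicator {0..1::real} s * (\<integral>\<^sup>+ u. \<Phi> (rot s u) \<partial>lborel) \<partial>lborel)"
    by (simp add: rot_inv[OF \<Phi>m])
  also have "\<dots> = (\<integral>\<^sup>+ s. \<integral>\<^sup>+ u. indicator {0..1::real} s * \<Phi> (rot s u) \<partial>lborel \<partial>lborel)"
    by (rule nn_integral_cong) (rule nn_integral_cmult[symmetric], measurable)
  also have "\<dots> = (\<integral>\<^sup>+ u. \<integral>\<^sup>+ s. indicator {0..1::real} s * \<Phi> (rot s u) \<partial>lborel \<partial>lborel)"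
  proof -
    have m: "(\<lambda>(s,u). indicator {0..1::real} s * \<Phi> (rot s u)) \<in> borel_measurable (lborel \<Otimes>\<^sub>M lborel)"
      by measurable
    show ?thesis by (rule lborel_pair.Fubini'[OF m, symmetric])
  qed
  also have "\<dots> = (\<integral>\<^sup>+ u. indicator (ball 0 r) u * ennreal (exp (-(pi*(norm u)^2/2))) *
       (\<integral>\<^sup>+ s. indicator {0..1::real} s * ennreal (norm (F (w + rot s u))) \<partial>lborel) \<partial>lborel)"
  proof (rule nn_integral_cong)
    fix u :: "real\<times>real"
    have "(\<integral>\<^sup>+ s. indicator {0..1::real} s * \<Phi> (rot s u) \<partial>lborel) =
       (\<integral>\<^sup>+ s. (indicator (ball 0 r) u * ennreal (exp (-(pi*(norm u)^2/2)))) * (indicator {0..1::real} s * ennreal (norm (F (w + rot s u)))) \<partial>lborel)"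
      by (rule nn_integral_cong) (simp add: \<Phi>_def norm_rot mult_ac indicator_def dist_norm)
    also have "\<dots> = indicator (ball 0 r) u * ennreal (exp (-(pi*(norm u)^2/2))) *
       (\<integral>\<^sup>+ s. indicator {0..1::real} s * ennreal (norm (F (w + rot s u))) \<partial>lborel)"
      by (rule nn_integral_cmult) measurable
    finally show "(\<integral>\<^sup>+ s. indicator {0..1::real} s * \<Phi> (rot s u) \<partial>lborel) = indicator (ball 0 r) u * ennreal (exp (-(pi*(norm u)^2/2))) *
       (\<integral>\<^sup>+ s. indicator {0..1::real} s * ennreal (norm (F (w + rot s u))) \<partial>lborel)" .
  qed
  also have "\<dots> \<ge> (\<integral>\<^sup>+ (u::real\<times>real). ennreal (norm (F w)) * (indicator (ball 0 r) u * ennreal (exp (-(pi*(norm u)^2)))) \<partial>lborel)"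
  proof (rule nn_integral_mono)
    fix u :: "real\<times>real"
    define E where "E = exp (pi*(norm u)^2/2)"
    define e where "e = exp (-(pi*(norm u)^2/2))"
    have Ee: "ennreal e * ennreal E = 1"
      by (simp add: E_def e_def ennreal_mult[symmetric] exp_minus)
    have ee: "ennreal e * ennreal e = ennreal (exp (-(pi*(norm u)^2)))"
      by (simp add: e_def ennreal_mult[symmetric] exp_add[symmetric])
    have ci: "ennreal (norm (F w)) \<le> ennreal E * (\<integral>\<^sup>+ s. indicator {0..1::real} s * ennreal (norm (F (w + rot s u))) \<partial>lborel)"
      unfolding F_def E_def by (rule CI[OF assms(1) int])
    have "ennreal e * ennreal (norm (F w)) \<le> ennreal e * (ennreal E * (\<integral>\<^sup>+ s. indicator {0..1::real} s * ennreal (norm (F (w + rot s u))) \<partial>lborel))"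
      by (rule mult_left_mono[OF ci]) simp
    also have "\<dots> = (\<integral>\<^sup>+ s. indicator {0..1::real} s * ennreal (norm (F (w + rot s u))) \<partial>lborel)"
      by (simp add: mult.assoc[symmetric] Ee)
    finally have "ennreal e * ennreal (norm (F w)) \<le> (\<integral>\<^sup>+ s. indicator {0..1::real} s * ennreal (norm (F (w + rot s u))) \<partial>lborel)" .
    hence "indicator (ball 0 r) u * ennreal e * (ennreal e * ennreal (norm (F w))) \<le> indicator (ball 0 r) u * ennreal e * (\<integral>\<^sup>+ s. indicator {0..1::real} s * ennreal (norm (F (w + rot s u))) \<partial>lborel)"
      by (rule mult_left_mono) simp
    moreover have "indicator (ball 0 r) u * ennreal e * (ennreal e * ennreal (norm (F w))) = ennreal (norm (F w)) * (indicator (ball 0 r) u * ennreal (exp (-(pi*(norm u)^2))))"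
      by (simp only: ee[symmetric] mult_ac)
    ultimately show "ennreal (norm (F w)) * (indicator (ball 0 r) u * ennreal (exp (-(pi*(norm u)^2)))) \<le> indicator (ball 0 r) u * ennreal (exp (-(pi*(norm u)^2/2))) *
       (\<integral>\<^sup>+ s. indicator {0..1::real} s * ennreal (norm (F (w + rot s u))) \<partial>lborel)"
      by (simp add: e_def)
  qed
  also have "(\<integral>\<^sup>+ (u::real\<times>real). ennreal (norm (F w)) * (indicator (ball 0 r) u * ennreal (exp (-(pi*(norm u)^2)))) \<partial>lborel)
      = ennreal (norm (F w)) * ennreal (1 - exp (-(pi*r^2)))"
    by (subst nn_integral_cmult) (auto simp: gauss_disc[OF r])
  also have "ennreal (norm (F w)) * ennreal (1 - exp (-(pi*r^2))) = ennreal ((1 - exp (-(pi*r^2))) * norm (stft g w))"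
  proof -
    have "exp (-(pi*r^2)) \<le> 1" using r by simp
    thus ?thesis by (simp add: F_def ennreal_mult[symmetric] mult.commute)
  qed
  finally show ?thesis using step1 unfolding F_def by simp
qed

lemma sf_lebesgue: "sigma_finite_measure (lebesgue :: ('a::euclidean_space) measure)"
proof -
  obtain A :: "'a set set" where A: "countable A" "A \<subseteq> sets lborel" "\<Union>A = space lborel" "\<forall>a\<in>A. emeasure lborel a \<noteq> \<infinity>"
    using sigma_finite_lborel unfolding sigma_finite_measure_def by blast
  show ?thesis unfolding sigma_finite_measure_def
    by (rule exI[of _ A]) (use A in auto)
qed

lemma pf_lebesgue: "pair_sigma_finite (lebesgue :: ('a::euclidean_space) measure) (lebesgue :: ('b::euclidean_space) measure)"
  by (simp add: pair_sigma_finite_def sf_lebesgue)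

lemma KEY:
  fixes \<Delta> :: "(real\<times>real) set"
  assumes [measurable]: "g \<in> borel_measurable borel" and int: "integrable lborel g" and r: "r \<ge> 0"
    and Delta[measurable]: "\<Delta> \<in> sets lebesgue"
    and dens: "\<And>z. emeasure lebesgue (\<Delta> \<inter> ball z r) \<le> ennreal M"
  shows "ennreal (1 - exp (-(pi*r^2))) * (\<integral>\<^sup>+ z. indicator \<Delta> z * ennreal (norm (stft g z)) \<partial>lebesgue)
      \<le> ennreal M * (\<integral>\<^sup>+ z. ennreal (norm (stft g z)) \<partial>lebesgue)"
proof -
  define F where "F = stft g"
  have Fm[measurable]: "F \<in> borel_measurable borel" unfolding F_def by measurable
  have FmL[measurable]: "F \<in> borel_measurable lebesgue"
    by (rule measurable_completion) simp
  have fstL[measurable]: "(fst :: (real\<times>real)\<times>(real\<times>real) \<Rightarrow> real\<times>real) \<in> (lebesgue \<Otimes>\<^sub>M lebesgue) \<rightarrow>\<^sub>M lebesgue"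
    by simp
  have sndL[measurable]: "(snd :: (real\<times>real)\<times>(real\<times>real) \<Rightarrow> real\<times>real) \<in> (lebesgue \<Otimes>\<^sub>M lebesgue) \<rightarrow>\<^sub>M lebesgue"
    by simp
  have idL: "(\<lambda>x. x) \<in> (lebesgue :: (real\<times>real) measure) \<rightarrow>\<^sub>M borel"
    by (rule measurable_completion) simp
  have fstB[measurable]: "(fst :: (real\<times>real)\<times>(real\<times>real) \<Rightarrow> real\<times>real) \<in> borel_measurable (lebesgue \<Otimes>\<^sub>M lebesgue)"
    using measurable_comp[OF fstL idL] by (simp add: comp_def)
  have sndB[measurable]: "(snd :: (real\<times>real)\<times>(real\<times>real) \<Rightarrow> real\<times>real) \<in> borel_measurable (lebesgue \<Otimes>\<^sub>M lebesgue)"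
    using measurable_comp[OF sndL idL] by (simp add: comp_def)
  define c where "c = 1 - exp (-(pi*r^2))"
  have c0: "c \<ge> 0" using r by (simp add: c_def)
  define J where "J w z = indicator \<Delta> w * (indicator {p::(real\<times>real)\<times>(real\<times>real). dist (fst p) (snd p) < r} (w,z) * ennreal (norm (F z)))" for w z :: "real\<times>real"
  have Jm: "(\<lambda>(w,z). J w z) \<in> borel_measurable (lebesgue \<Otimes>\<^sub>M lebesgue)"
    unfolding J_def by measurable
  have "ennreal c * (\<integral>\<^sup>+ z. indicator \<Delta> z * ennreal (norm (F z)) \<partial>lebesgue)
      = (\<integral>\<^sup>+ w. indicator \<Delta> w * ennreal (c * norm (F w)) \<partial>lebesgue)"
    by (subst nn_integral_cmult[symmetric]) (auto intro!: nn_integral_cong simp: ennreal_mult c0 mult_ac)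
  also have "\<dots> \<le> (\<integral>\<^sup>+ w. \<integral>\<^sup>+ z. J w z \<partial>lebesgue \<partial>lebesgue)"
  proof (rule nn_integral_mono)
    fix w :: "real\<times>real"
    have "ennreal (c * norm (F w)) \<le> (\<integral>\<^sup>+ z. indicator (ball w r) z * ennreal (norm (F z)) \<partial>lborel)"
      unfolding c_def F_def by (rule PW[OF assms(1) int r])
    also have "\<dots> = (\<integral>\<^sup>+ z. indicator (ball w r) z * ennreal (norm (F z)) \<partial>lebesgue)"
      by (simp add: nn_integral_completion)
    finally have "indicator \<Delta> w * ennreal (c * norm (F w)) \<le> indicator \<Delta> w * (\<integral>\<^sup>+ z. indicator (ball w r) z * ennreal (norm (F z)) \<partial>lebesgue)"
      by (rule mult_left_mono) simp
    also have "\<dots> = (\<integral>\<^sup>+ z. indicator \<Delta> w * (indicator (ball w r) z * ennreal (norm (F z))) \<partial>lebesgue)"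
    proof (rule nn_integral_cmult[symmetric])
      show "(\<lambda>z. indicator (ball w r) z * ennreal (norm (F z))) \<in> borel_measurable lebesgue"
        by (rule measurable_completion) measurable
    qed
    also have "\<dots> = (\<integral>\<^sup>+ z. J w z \<partial>lebesgue)"
      unfolding J_def by (rule nn_integral_cong) (auto simp: indicator_def mem_ball)
    finally show "indicator \<Delta> w * ennreal (c * norm (F w)) \<le> (\<integral>\<^sup>+ z. J w z \<partial>lebesgue)" .
  qed
  also have "\<dots> = (\<integral>\<^sup>+ z. \<integral>\<^sup>+ w. J w z \<partial>lebesgue \<partial>lebesgue)"
    by (rule pair_sigma_finite.Fubini'[OF pf_lebesgue Jm, symmetric])
  also have "\<dots> \<le> (\<integral>\<^sup>+ z. ennreal M * ennreal (norm (F z)) \<partial>lebesgue)"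
  proof (rule nn_integral_mono)
    fix z :: "real\<times>real"
    have "(\<integral>\<^sup>+ w. J w z \<partial>lebesgue) = (\<integral>\<^sup>+ w. ennreal (norm (F z)) * indicator (\<Delta> \<inter> ball z r) w \<partial>lebesgue)"
      unfolding J_def by (rule nn_integral_cong) (auto simp: indicator_def mem_ball dist_commute)
    also have "\<dots> = ennreal (norm (F z)) * emeasure lebesgue (\<Delta> \<inter> ball z r)"
      by (rule nn_integral_cmult_indicator) (intro sets.Int[OF Delta] fmeasurableD lmeasurable_ball)
    also have "\<dots> \<le> ennreal (norm (F z)) * ennreal M"
      by (rule mult_left_mono[OF dens]) simp
    finally show "(\<integral>\<^sup>+ w. J w z \<partial>lebesgue) \<le> ennreal M * ennreal (norm (F z))"
      by (simp add: mult.commute)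
  qed
  also have "\<dots> = ennreal M * (\<integral>\<^sup>+ z. ennreal (norm (F z)) \<partial>lebesgue)"
    by (rule nn_integral_cmult) measurable
  finally show ?thesis unfolding c_def F_def .
qed

lemma id_leb_meas[measurable]: "(\<lambda>x::'a::euclidean_space. x) \<in> borel_measurable lebesgue"
  by (rule measurable_completion) simp

lemma stft_integrand_integrable:
  assumes int: "integrable lebesgue f"
  shows "integrable lebesgue (\<lambda>t. f t * cnj (gauss_window (t - x)) * exp (complex_of_real (-2*pi) * \<i> * complex_of_real (\<omega> * t)))"
proof (rule Bochner_Integration.integrable_bound)
  show "integrable lebesgue (\<lambda>t. complex_of_real (2 powr (1/4)) * f t)"
    using int by (rule integrable_mult_right)
  have [measurable]: "f \<in> borel_measurable lebesgue" using int by (rule borel_measurable_integrable)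
  show "(\<lambda>t. f t * cnj (gauss_window (t - x)) * exp (complex_of_real (-2*pi) * \<i> * complex_of_real (\<omega> * t))) \<in> borel_measurable lebesgue"
    unfolding gauss_window_def by measurable
  show "AE t in lebesgue. norm (f t * cnj (gauss_window (t - x)) * exp (complex_of_real (-2*pi) * \<i> * complex_of_real (\<omega> * t)))
      \<le> norm (complex_of_real (2 powr (1/4)) * f t)"
  proof (rule AE_I2)
    fix t
    have "exp (- pi * (t - x)^2) \<le> 1" by simp
    hence "2 powr (1/4) * exp (- pi * (t - x)^2) \<le> 2 powr (1/4)" by simp
    thus "norm (f t * cnj (gauss_window (t - x)) * exp (complex_of_real (-2*pi) * \<i> * complex_of_real (\<omega> * t)))
      \<le> norm (complex_of_real (2 powr (1/4)) * f t)"
      by (simp add: gauss_window_def norm_mult norm_exp_eq_Re mult.commute mult_left_mono)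
  qed
qed

lemma stft_diff:
  assumes "integrable lebesgue f" "integrable lebesgue h"
  shows "stft (\<lambda>t. f t - h t) z = stft f z - stft h z"
proof -
  obtain x \<omega> where z: "z = (x, \<omega>)" by (cases z)
  show ?thesis unfolding z stft_def
    using Bochner_Integration.integral_diff[OF stft_integrand_integrable[OF assms(1)] stft_integrand_integrable[OF assms(2)], of x \<omega> x \<omega>]
    by (simp add: ring_distribs)
qed

lemma borel_version:
  assumes int: "integrable lebesgue g"
  obtains g' where "g' \<in> borel_measurable borel" "integrable lborel g'" "stft g = stft g'"
proof -
  have "g \<in> borel_measurable (completion lborel)" using int by (rule borel_measurable_integrable)
  hence gm: "g \<in> borel_measurable (completion lborel)" .
  have "(\<lambda>x. Re (g x)) \<in> borel_measurable (completion lborel)" using gm by measurable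
  then obtain gr where grm: "gr \<in> borel_measurable lborel" and aer: "AE x in lborel. Re (g x) = gr x"
    using completion_ex_borel_measurable_real by blast
  have "(\<lambda>x. Im (g x)) \<in> borel_measurable (completion lborel)" using gm by measurable
  then obtain gi where gim: "gi \<in> borel_measurable lborel" and aei: "AE x in lborel. Im (g x) = gi x"
    using completion_ex_borel_measurable_real by blast
  define g' where "g' x = complex_of_real (gr x) + \<i> * complex_of_real (gi x)" for x
  have [measurable]: "gr \<in> borel_measurable lborel" "gi \<in> borel_measurable lborel" using grm gim by auto
  have g'm: "g' \<in> borel_measurable lborel" unfolding g'_def by measurable
  have ae: "AE x in lborel. g x = g' x" using aer aei by eventually_elim (simp add: g'_def complex_eq_iff)
  have g'mb: "g' \<in> borel_measurable borel" using g'm by simp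
  have aeL: "AE x in lebesgue. g x = g' x" using ae by (rule AE_completion)
  have "integrable lebesgue g'"
    using int aeL by (rule integrable_cong_AE_imp[OF _ measurable_completion[OF g'm]])
  hence i': "integrable lborel g'" using integrable_completion[OF g'm] by simp
  have "stft g = stft g'"
  proof (rule ext)
    fix z :: "real\<times>real"
    obtain x \<omega> where z: "z = (x, \<omega>)" by (cases z)
    have [measurable]: "g \<in> borel_measurable lebesgue" using int by (rule borel_measurable_integrable)
    have [measurable]: "g' \<in> borel_measurable lebesgue" by (rule measurable_completion[OF g'm])
    show "stft g z = stft g' z" unfolding z stft_def
      by (simp, rule integral_cong_AE) (unfold gauss_window_def, measurable, use aeL in auto)
  qed
  thus ?thesis using that g'mb i' by blast
qed

lemma nyq:
  fixes \<Delta> :: "(real\<times>real) set"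
  assumes Delta: "\<Delta> \<in> sets lebesgue" and R: "R > 0"
  shows "\<And>z. emeasure lebesgue (\<Delta> \<inter> ball z (1/R)) \<le> ennreal (nyquist_density \<Delta> R)"
    and "nyquist_density \<Delta> R \<ge> 0"
proof -
  have sets: "\<Delta> \<inter> ball z (1/R) \<in> sets lebesgue" for z
    by (intro sets.Int[OF Delta] fmeasurableD lmeasurable_ball)
  have em: "emeasure lebesgue (\<Delta> \<inter> ball z (1/R)) \<le> ennreal (pi * (1/R)^2)" for z
  proof -
    have "emeasure lebesgue (\<Delta> \<inter> ball z (1/R)) \<le> emeasure lebesgue (ball z (1/R))"
      by (rule emeasure_mono) (auto intro: fmeasurableD lmeasurable_ball)
    also have "\<dots> = emeasure lborel (ball z (1/R))" by simp
    also have "\<dots> = ennreal (pi * (1/R)^2)" using R by (simp add: emeasure_ball2)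
    finally show ?thesis .
  qed
  have fin: "emeasure lebesgue (\<Delta> \<inter> ball z (1/R)) = ennreal (measure lebesgue (\<Delta> \<inter> ball z (1/R)))" for z
    using em[of z] by (intro emeasure_eq_ennreal_measure) (auto simp: top_unique)
  have mb: "measure lebesgue (\<Delta> \<inter> ball z (1/R)) \<le> pi * (1/R)^2" for z
    using em[of z] unfolding fin by simp
  have bdd: "bdd_above (range (\<lambda>z. measure lebesgue (\<Delta> \<inter> ball z (1/R))))"
    using mb by (intro bdd_aboveI2) auto
  have le: "measure lebesgue (\<Delta> \<inter> ball z (1/R)) \<le> nyquist_density \<Delta> R" for z
    unfolding nyquist_density_def by (rule cSUP_upper[OF _ bdd]) simp
  show "emeasure lebesgue (\<Delta> \<inter> ball z (1/R)) \<le> ennreal (nyquist_density \<Delta> R)" for z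
    unfolding fin using le[of z] by (rule ennreal_leI)
  show "nyquist_density \<Delta> R \<ge> 0"
    using le[of 0] measure_nonneg[of lebesgue "\<Delta> \<inter> ball 0 (1/R)"] by linarith
qed

theorem corollary2:
  fixes f \<sigma> :: "real \<Rightarrow> complex"
    and \<Delta> :: "(real \<times> real) set"
    and N H :: "real \<times> real \<Rightarrow> complex"
    and \<epsilon> R :: real
  assumes f: "f \<in> M1"
    and Delta: "\<Delta> \<in> sets lebesgue"
    and N: "integrable lebesgue N" "L1norm N \<le> ennreal \<epsilon>"
    and H: "H = proj (- \<Delta>) (\<lambda>z. stft f z + N z)"
    and R: "R > 0"
    and dens: "nyquist_density \<Delta> R < 1 - exp (- pi / R\<^sup>2)"
    and sigma: "\<sigma> \<in> M1"
    and argmin: "\<forall>h\<in>M1. L1norm (proj (- \<Delta>) (\<lambda>z. H z - stft \<sigma> z))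
                         \<le> L1norm (proj (- \<Delta>) (\<lambda>z. H z - stft h z))"
  shows "L1norm (stft (\<lambda>t. f t - \<sigma> t))
     \<le> ennreal (2 * \<epsilon> * (1 - exp (- pi / R\<^sup>2)) / (1 - exp (- pi / R\<^sup>2) - nyquist_density \<Delta> R))"
proof -
  from f have fi: "integrable lebesgue f" and fm[measurable]: "stft f \<in> borel_measurable lebesgue"
    and fL: "L1norm (stft f) < \<infinity>" by (auto simp: M1_def)
  from sigma have si: "integrable lebesgue \<sigma>" and sm[measurable]: "stft \<sigma> \<in> borel_measurable lebesgue"
    and sL: "L1norm (stft \<sigma>) < \<infinity>" by (auto simp: M1_def)
  have Nm[measurable]: "N \<in> borel_measurable lebesgue" using N(1) by (rule borel_measurable_integrable)
  have Dm[measurable]: "\<Delta> \<in> sets lebesgue" by (rule Delta)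
  have cDm[measurable]: "- \<Delta> \<in> sets lebesgue"
    using sets.compl_sets[OF Delta] by (simp add: Compl_eq_Diff_UNIV)
  define r where "r = 1 / R"
  have r0: "r \<ge> 0" using R by (simp add: r_def)
  define c where "c = 1 - exp (- pi / R\<^sup>2)"
  define \<rho> where "\<rho> = nyquist_density \<Delta> R"
  have c_eq: "1 - exp (-(pi*r^2)) = c" by (simp add: r_def c_def power_divide)
  have \<rho>0: "\<rho> \<ge> 0" unfolding \<rho>_def by (rule nyq(2)[OF Delta R])
  have c\<rho>: "c - \<rho> > 0" using dens by (simp add: c_def \<rho>_def)
  define g where "g = (\<lambda>t. f t - \<sigma> t)"
  have gi: "integrable lebesgue g" unfolding g_def using fi si by (rule Bochner_Integration.integrable_diff)
  obtain g' where g'm: "g' \<in> borel_measurable borel" and g'i: "integrable lborel g'" and gg': "stft g = stft g'"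
    using borel_version[OF gi] by blast
  define F where "F = stft g"
  have Feq: "F = (\<lambda>z. stft f z - stft \<sigma> z)"
    unfolding F_def g_def by (rule ext) (rule stft_diff[OF fi si])
  have Fm[measurable]: "F \<in> borel_measurable lebesgue" unfolding Feq by measurable
  define A where "A = (\<integral>\<^sup>+ z. indicator \<Delta> z * ennreal (norm (F z)) \<partial>lebesgue)"
  define B where "B = (\<integral>\<^sup>+ z. indicator (- \<Delta>) z * ennreal (norm (F z)) \<partial>lebesgue)"
  define T where "T = (\<integral>\<^sup>+ z. ennreal (norm (F z)) \<partial>lebesgue)"
  have key: "ennreal c * A \<le> ennreal \<rho> * T"
    using KEY[OF g'm g'i r0 Delta nyq(1)[OF Delta R, folded r_def]]
    unfolding A_def T_def F_def gg' c_eq \<rho>_def .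
  have TAB: "T = A + B"
    unfolding T_def A_def B_def
    by (subst nn_integral_add[symmetric]) (auto intro!: nn_integral_cong simp: indicator_def)
  have Tfin: "T < \<infinity>"
  proof -
    have "T \<le> (\<integral>\<^sup>+ z. ennreal (norm (stft f z)) + ennreal (norm (stft \<sigma> z)) \<partial>lebesgue)"
      unfolding T_def Feq by (rule nn_integral_mono) (simp add: ennreal_plus[symmetric] norm_triangle_ineq4 del: ennreal_plus)
    also have "\<dots> = L1norm (stft f) + L1norm (stft \<sigma>)"
      unfolding L1norm_def by (rule nn_integral_add) auto
    also have "\<dots> < \<infinity>" using fL sL by simp
    finally show ?thesis .
  qed
  define P where "P h = L1norm (proj (- \<Delta>) (\<lambda>z. H z - stft h z))" for h
  have Pf: "P f \<le> L1norm N"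
  proof -
    have "P f = (\<integral>\<^sup>+ z. ennreal (norm (indicator (- \<Delta>) z * N z)) \<partial>lebesgue)"
      unfolding P_def L1norm_def H proj_def
      by (rule nn_integral_cong) (simp add: indicator_def)
    also have "\<dots> \<le> L1norm N"
      unfolding L1norm_def by (rule nn_integral_mono) (simp add: indicator_def norm_mult)
    finally show ?thesis .
  qed
  have B2: "B \<le> 2 * L1norm N"
  proof -
    have "B \<le> (\<integral>\<^sup>+ z. ennreal (norm (proj (- \<Delta>) (\<lambda>z. H z - stft \<sigma> z) z)) + ennreal (norm (proj (- \<Delta>) (\<lambda>z. H z - stft f z) z)) \<partial>lebesgue)"
      unfolding B_def
    proof (rule nn_integral_mono)
      fix z
      have "indicator (- \<Delta>) z * F z = proj (- \<Delta>) (\<lambda>z. H z - stft \<sigma> z) z - proj (- \<Delta>) (\<lambda>z. H z - stft f z) z"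
        unfolding Feq proj_def by (simp add: algebra_simps)
      hence "norm (indicator (- \<Delta>) z * F z) \<le> norm (proj (- \<Delta>) (\<lambda>z. H z - stft \<sigma> z) z) + norm (proj (- \<Delta>) (\<lambda>z. H z - stft f z) z)"
        by (simp add: norm_triangle_ineq4)
      moreover have "norm (indicator (- \<Delta>) z * F z) = indicator (- \<Delta>) z * norm (F z)"
        by (simp add: indicator_def)
      ultimately show "indicator (- \<Delta>) z * ennreal (norm (F z)) \<le> ennreal (norm (proj (- \<Delta>) (\<lambda>z. H z - stft \<sigma> z) z)) + ennreal (norm (proj (- \<Delta>) (\<lambda>z. H z - stft f z) z))"
        by (auto simp: indicator_def ennreal_plus[symmetric] simp del: ennreal_plus intro!: ennreal_leI)
    qed
    also have "\<dots> = P \<sigma> + P f"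
      unfolding P_def L1norm_def by (rule nn_integral_add) (auto simp: H proj_def)
    also have "\<dots> \<le> P f + P f"
      using argmin f unfolding P_def by (auto intro: add_right_mono)
    also have "\<dots> \<le> L1norm N + L1norm N" using Pf by (intro add_mono)
    finally show ?thesis by (simp add: mult_2)
  qed
  have Afin: "A < \<infinity>" and Bfin: "B < \<infinity>" using Tfin TAB by (auto simp: top_unique)
  obtain a where a: "A = ennreal a" "a \<ge> 0" using Afin by (cases A) auto
  obtain b where b: "B = ennreal b" "b \<ge> 0" using Bfin by (cases B) auto
  have T_ab: "T = ennreal (a + b)" using TAB a b by simp
  have e1: "ennreal c * ennreal a = ennreal (c*a)" using c\<rho> \<rho>0 a by (simp add: ennreal_mult)
  have e2: "ennreal \<rho> * ennreal (a+b) = ennreal (\<rho>*(a+b))" using \<rho>0 a b by (simp add: ennreal_mult)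
  have "ennreal (c * a) \<le> ennreal (\<rho> * (a + b))"
    using key unfolding a(1) T_ab e1 e2 .
  hence ca: "c * a \<le> \<rho> * (a + b)" using \<rho>0 a b by (simp add: ennreal_le_iff)
  have LHS: "L1norm (stft (\<lambda>t. f t - \<sigma> t)) = ennreal (a + b)"
    using T_ab unfolding T_def F_def g_def L1norm_def .
  show ?thesis
  proof (cases "\<epsilon> \<ge> 0")
    case True
    have "ennreal b \<le> ennreal (2 * \<epsilon>)"
      using B2 N(2) b True by (simp add: ennreal_mult order_trans[OF _ mult_left_mono])
    hence b2: "b \<le> 2 * \<epsilon>" using True by (simp add: ennreal_le_iff)
    have "(c - \<rho>) * (a + b) \<le> c * b" using ca by (simp add: algebra_simps)
    also have "\<dots> \<le> c * (2 * \<epsilon>)" using b2 c\<rho> \<rho>0 by (intro mult_left_mono) auto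
    finally have "a + b \<le> 2 * \<epsilon> * c / (c - \<rho>)" using c\<rho> by (simp add: pos_le_divide_eq mult.commute)
    thus ?thesis unfolding LHS c_def \<rho>_def by (intro ennreal_leI) simp
  next
    case False
    have "ennreal b \<le> 0"
      using B2 N(2) b False by (simp add: ennreal_neg order_trans)
    hence "b = 0" using b by simp
    hence "(c - \<rho>) * a \<le> 0" using ca by (simp add: algebra_simps)
    hence "a \<le> 0" using c\<rho> by (simp add: mult_le_0_iff)
    hence "a + b = 0" using a \<open>b = 0\<close> by simp
    thus ?thesis unfolding LHS by simp
  qed
qed

end
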